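(* Let $(A,G)$ be a stable admissible pair with $A\in M_{Q_0}(\mathbb Z)$. Assume that every cluster variable of $\mathcal A(A,\mathbf u)$ can be written as a Laurent polynomial with positive coefficients in the initial cluster $\mathbf u$. Then every cluster variable of $\mathcal A(A/G,\mathbf v)$ can be written as a Laurent polynomial with positive coefficients in the initial cluster $\mathbf v$.
   Context: $Q_0$ finite, $A=(a_{ij})$ skew-symmetrizable ($DA$ skew-symmetric for a positive integer diagonal $D$). Mutation of matrices: $\mu_k(B)=(b'_{ij})$ with $b'_{ij}=-b_{ij}$ if $k\in\{i,j\}$, else $b_{ij}+\tfrac12(|b_{ik}|b_{kj}+b_{ik}|b_{kj}|)$; of seeds: $x_k$ replaced by $x'_k$ with $x_kx'_k=\prod_{b_{ik}>0}x_i^{b_{ik}}+\prod_{b_{ik}<0}x_i^{-b_{ik}}$. The cluster algebra $\mathcal A(B,\mathbf w)$ is generated over $\mathbb Z$ by the cluster variables (entries of clusters of seeds mutation-equivalent to $(B,\mathbf w)$). A permutation $g$ of $Q_0$ is an automorphism of $B$ if $b_{gi,gj}=b_{ij}$; a group $G$ of automorphisms is admissible ($(B,G)$ admissible pair) if for distinct $i,j$ in the same orbit there is no path of length $1$ or $2$ from $i$ to $j$ in the quiver of $B$ ($b_{ij}\le0$ and no $k$ with $b_{ik}>0,b_{kj}>0$). With $\overline Q_0$ the set of orbits, $(A/G)_{\mathbf i,\mathbf j}=\sum_{k\in\mathbf i}a_{k,j}$ ($j\in\mathbf j$). Orbit mutation $\mu^G_{\mathbf i}=\prod_{j\in\mathbf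 i}\mu_j$; $(A,G)$ is stable if all $(\mu^G_{\mathbf i_m}\circ\cdots\circ\mu^G_{\mathbf i_1}(A),G)$ are admissible for all finite sequences of orbits. $\mathbf u=(u_i)_{i\in Q_0}$, $\mathbf v=(v_{\mathbf i})_{\mathbf i\in\overline Q_0}$ are indeterminates. *)

theory Defs
  imports Complex_Main "HOL-Library.Poly_Mapping"
begin

(* Exchange matrices: functions 'v => 'v => int. Vertex set is either the
   whole (finite) type, or an explicit set V (used for the set of G-orbits). *)

definition skew_symmetrizable :: "('a::finite \<Rightarrow> 'a \<Rightarrow> int) \<Rightarrow> bool" where
  "skew_symmetrizable A \<longleftrightarrow>
     (\<exists>D :: 'a \<Rightarrow> int. (\<forall>i. 0 < D i) \<and> (\<forall>i j. D i * A i j = - (D j * A j i)))"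

definition mat_mut :: "'v \<Rightarrow> ('v \<Rightarrow> 'v \<Rightarrow> int) \<Rightarrow> ('v \<Rightarrow> 'v \<Rightarrow> int)" where
  "mat_mut k B = (\<lambda>i j. if i = k \<or> j = k then - B i j
      else B i j + (\<bar>B i k\<bar> * B k j + B i k * \<bar>B k j\<bar>) div 2)"

(* cluster variables are represented by the rational functions they define,
   evaluated at points u with positive coordinates (a rational function is
   determined by these values). *)
type_synonym 'v ratfun = "('v \<Rightarrow> real) \<Rightarrow> real"

definition seed_mut :: "'v set \<Rightarrow> 'v \<Rightarrow> ('v \<Rightarrow> 'v \<Rightarrow> int) \<times> ('v \<Rightarrow> 'v ratfun)
     \<Rightarrow> ('v \<Rightarrow> 'v \<Rightarrow> int) \<times> ('v \<Rightarrow> 'v ratfun)" where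
  "seed_mut V k S = (case S of (B, x) \<Rightarrow>
     (mat_mut k B,
      x(k := (\<lambda>u. ((\<Prod>i\<in>{i\<in>V. B i k > 0}. x i u ^ nat (B i k))
                  + (\<Prod>i\<in>{i\<in>V. B i k < 0}. x i u ^ nat (- B i k))) / x k u))))"

inductive_set seeds :: "'v set \<Rightarrow> ('v \<Rightarrow> 'v \<Rightarrow> int) \<Rightarrow> (('v \<Rightarrow> 'v \<Rightarrow> int) \<times> ('v \<Rightarrow> 'v ratfun)) set"
  for V :: "'v set" and B0 :: "'v \<Rightarrow> 'v \<Rightarrow> int" where
  init: "(B0, (\<lambda>i u. u i)) \<in> seeds V B0"
| mut: "S \<in> seeds V B0 \<Longrightarrow> k \<in> V \<Longrightarrow> seed_mut V k S \<in> seeds V B0"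

definition cluster_vars :: "'v set \<Rightarrow> ('v \<Rightarrow> 'v \<Rightarrow> int) \<Rightarrow> 'v ratfun set" where
  "cluster_vars V B0 = {x i | B x i. (B, x) \<in> seeds V B0 \<and> i \<in> V}"

(* Laurent polynomials with integer coefficients: monomials are finitely
   supported exponent vectors 'v \<Rightarrow>\<^sub>0 int *)
definition monomial_eval :: "('v \<Rightarrow>\<^sub>0 int) \<Rightarrow> ('v \<Rightarrow> real) \<Rightarrow> real" where
  "monomial_eval mon u = (\<Prod>v\<in>Poly_Mapping.keys mon. u v powi (Poly_Mapping.lookup mon v))"

definition laurent_eval :: "(('v \<Rightarrow>\<^sub>0 int) \<Rightarrow>\<^sub>0 int) \<Rightarrow> ('v \<Rightarrow> real) \<Rightarrow> real" where
  "laurent_eval L u = (\<Sum>mon\<in>Poly_Mapping.keys L. real_of_int (Poly_Mapping.lookup L mon) * monomial_eval mon u)"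

(* f is a Laurent polynomial with positive (= nonnegative) coefficients
   in the initial cluster variables indexed by V *)
definition positive_laurent :: "'v set \<Rightarrow> 'v ratfun \<Rightarrow> bool" where
  "positive_laurent V f \<longleftrightarrow>
     (\<exists>L :: ('v \<Rightarrow>\<^sub>0 int) \<Rightarrow>\<^sub>0 int.
        (\<forall>m. 0 \<le> Poly_Mapping.lookup L m) \<and> (\<forall>m\<in>Poly_Mapping.keys L. Poly_Mapping.keys m \<subseteq> V) \<and>
        (\<forall>u. (\<forall>i. 0 < u i) \<longrightarrow> f u = laurent_eval L u))"

definition perm_group :: "('a \<Rightarrow> 'a) set \<Rightarrow> bool" where
  "perm_group G \<longleftrightarrow> id \<in> G \<and> (\<forall>g\<in>G. bij g) \<and> (\<forall>g\<in>G. \<forall>h\<in>G. g \<circ> h \<in> G)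
     \<and> (\<forall>g\<in>G. inv g \<in> G)"

definition automorphism :: "('a \<Rightarrow> 'a \<Rightarrow> int) \<Rightarrow> ('a \<Rightarrow> 'a) \<Rightarrow> bool" where
  "automorphism B g \<longleftrightarrow> bij g \<and> (\<forall>i j. B (g i) (g j) = B i j)"

definition orbit :: "('a \<Rightarrow> 'a) set \<Rightarrow> 'a \<Rightarrow> 'a set" where
  "orbit G i = (\<lambda>g. g i) ` G"

definition orbits :: "('a \<Rightarrow> 'a) set \<Rightarrow> 'a set set" where
  "orbits G = range (orbit G)"

definition admissible :: "('a \<Rightarrow> 'a \<Rightarrow> int) \<Rightarrow> ('a \<Rightarrow> 'a) set \<Rightarrow> bool" where
  "admissible B G \<longleftrightarrow> perm_group G \<and> (\<forall>g\<in>G. automorphism B g) \<and>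
     (\<forall>i j. i \<noteq> j \<and> j \<in> orbit G i \<longrightarrow> B i j \<le> 0 \<and> \<not> (\<exists>k. B i k > 0 \<and> B k j > 0))"

(* orbit mutation: product of mu_j over j in the orbit (taken in some order;
   for admissible pairs these mutations commute) *)
definition orbit_mut :: "'a set \<Rightarrow> ('a \<Rightarrow> 'a \<Rightarrow> int) \<Rightarrow> ('a \<Rightarrow> 'a \<Rightarrow> int)" where
  "orbit_mut I B = fold mat_mut (SOME xs. distinct xs \<and> set xs = I) B"

definition stable :: "('a \<Rightarrow> 'a \<Rightarrow> int) \<Rightarrow> ('a \<Rightarrow> 'a) set \<Rightarrow> bool" where
  "stable B G \<longleftrightarrow> (\<forall>Is. set Is \<subseteq> orbits G \<longrightarrow> admissible (fold orbit_mut Is B) G)"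

definition quot_mat :: "('a \<Rightarrow> 'a \<Rightarrow> int) \<Rightarrow> ('a \<Rightarrow> 'a) set \<Rightarrow> 'a set \<Rightarrow> 'a set \<Rightarrow> int" where
  "quot_mat A G I J = (\<Sum>k\<in>I. A k (SOME j. j \<in> J))"

end

theory Submission
  imports Defs
begin


lemma meval_superset:
  assumes "finite S" "Poly_Mapping.keys m \<subseteq> S"
  shows "monomial_eval m u = (\<Prod>a\<in>S. u a powi Poly_Mapping.lookup m a)"
  unfolding monomial_eval_def
  by (rule prod.mono_neutral_left) (use assms in \<open>auto simp: in_keys_iff\<close>)

lemma leval_superset:
  assumes "finite S" "Poly_Mapping.keys L \<subseteq> S"
  shows "laurent_eval L u = (\<Sum>m\<in>S. real_of_int (Poly_Mapping.lookup L m) * monomial_eval m u)"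
  unfolding laurent_eval_def
  by (rule sum.mono_neutral_left) (use assms in \<open>auto simp: in_keys_iff\<close>)

lemma powi_sum:
  fixes x :: real
  assumes "x \<noteq> 0"
  shows "x powi (\<Sum>a\<in>S. f a) = (\<Prod>a\<in>S. x powi f a)"
proof (induction S rule: infinite_finite_induct)
  case (insert a S)
  then show ?case using assms by (simp add: power_int_add)
qed auto

definition mapmon :: "('a \<Rightarrow> 'b) \<Rightarrow> ('a \<Rightarrow>\<^sub>0 int) \<Rightarrow> ('b \<Rightarrow>\<^sub>0 int)" where
  "mapmon h m = (\<Sum>a\<in>Poly_Mapping.keys m. Poly_Mapping.single (h a) (Poly_Mapping.lookup m a))"

lemma lookup_mapmon: "Poly_Mapping.lookup (mapmon h m) b =
   (\<Sum>a\<in>{a\<in>Poly_Mapping.keys m. h a = b}. Poly_Mapping.lookup m a)"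
  unfolding mapmon_def lookup_sum lookup_single
  by (simp add: sum.inter_filter[symmetric] when_def eq_commute)

lemma keys_mapmon: "Poly_Mapping.keys (mapmon h m) \<subseteq> h ` Poly_Mapping.keys m"
  unfolding mapmon_def
  by (rule subset_trans[OF keys_sum]) (auto split: if_splits)

lemma meval_mapmon:
  assumes pos: "\<forall>b. 0 < u b"
  shows "monomial_eval (mapmon h m) u = monomial_eval m (\<lambda>a. u (h a))"
proof -
  have "monomial_eval (mapmon h m) u = (\<Prod>b\<in>h ` Poly_Mapping.keys m. u b powi Poly_Mapping.lookup (mapmon h m) b)"
    by (rule meval_superset) (auto intro: keys_mapmon[THEN subsetD])
  also have "\<dots> = (\<Prod>b\<in>h ` Poly_Mapping.keys m. \<Prod>a\<in>{a\<in>Poly_Mapping.keys m. h a = b}. u b powi Poly_Mapping.lookup m a)"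
    unfolding lookup_mapmon
    by (rule prod.cong[OF refl], rule powi_sum) (use pos in \<open>auto simp: less_le\<close>)
  also have "\<dots> = (\<Prod>b\<in>h ` Poly_Mapping.keys m. \<Prod>a\<in>{a\<in>Poly_Mapping.keys m. h a = b}. u (h a) powi Poly_Mapping.lookup m a)"
    by (rule prod.cong[OF refl], rule prod.cong) auto
  also have "\<dots> = (\<Prod>a\<in>Poly_Mapping.keys m. u (h a) powi Poly_Mapping.lookup m a)"
    by (rule prod.group) auto
  finally show ?thesis unfolding monomial_eval_def .
qed

lemma positive_transfer:
  fixes h :: "'a \<Rightarrow> 'b"
  assumes "positive_laurent UNIV f"
  shows "positive_laurent (range h) (\<lambda>v. f (\<lambda>j. v (h j)))"
proof -
  obtain L where L0: "\<forall>m. 0 \<le> Poly_Mapping.lookup L m"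
    and L2: "\<forall>u. (\<forall>i. 0 < u i) \<longrightarrow> f u = laurent_eval L u"
    using assms unfolding positive_laurent_def by blast
  define L' where "L' = (\<Sum>m\<in>Poly_Mapping.keys L. Poly_Mapping.single (mapmon h m) (Poly_Mapping.lookup L m))"
  have lk: "Poly_Mapping.lookup L' m' = (\<Sum>m\<in>{m\<in>Poly_Mapping.keys L. mapmon h m = m'}. Poly_Mapping.lookup L m)" for m'
    unfolding L'_def lookup_sum lookup_single
    by (simp add: sum.inter_filter[symmetric] when_def eq_commute)
  have kL': "Poly_Mapping.keys L' \<subseteq> mapmon h ` Poly_Mapping.keys L"
    unfolding L'_def
    by (rule subset_trans[OF keys_sum]) (auto split: if_splits)
  have "\<forall>m. 0 \<le> Poly_Mapping.lookup L' m"
    unfolding lk using L0 by (simp add: sum_nonneg)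
  moreover have "\<forall>m\<in>Poly_Mapping.keys L'. Poly_Mapping.keys m \<subseteq> range h"
    using kL' keys_mapmon by fastforce
  moreover have "(\<lambda>v. f (\<lambda>j. v (h j))) u = laurent_eval L' u" if pos: "\<forall>i. 0 < u i" for u
  proof -
    have "(\<lambda>v. f (\<lambda>j. v (h j))) u = laurent_eval L (\<lambda>j. u (h j))"
      using L2 pos by auto
    also have "\<dots> = (\<Sum>m\<in>Poly_Mapping.keys L. real_of_int (Poly_Mapping.lookup L m) * monomial_eval (mapmon h m) u)"
      unfolding laurent_eval_def by (simp add: meval_mapmon[OF pos])
    also have "\<dots> = (\<Sum>m'\<in>mapmon h ` Poly_Mapping.keys L. \<Sum>m\<in>{m\<in>Poly_Mapping.keys L. mapmon h m = m'}. real_of_int (Poly_Mapping.lookup L m) * monomial_eval (mapmon h m) u)"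
      by (rule sum.group[symmetric]) auto
    also have "\<dots> = (\<Sum>m'\<in>mapmon h ` Poly_Mapping.keys L. real_of_int (Poly_Mapping.lookup L' m') * monomial_eval m' u)"
      unfolding lk by (auto simp: sum_distrib_right intro!: sum.cong)
    also have "\<dots> = laurent_eval L' u"
      by (rule leval_superset[symmetric]) (use kL' in auto)
    finally show ?thesis .
  qed
  ultimately show ?thesis unfolding positive_laurent_def by blast
qed



definition ff :: "int \<Rightarrow> int \<Rightarrow> int" where
  "ff a b = (\<bar>a\<bar> * b + a * \<bar>b\<bar>) div 2"

lemma ff_alt: "ff a b = (if a > 0 \<and> b > 0 then a * b else if a < 0 \<and> b < 0 then - (a * b) else 0)"
proof -
  consider "a > 0" "b > 0" | "a < 0" "b < 0" | "a \<ge> 0" "b \<le> 0" | "a \<le> 0" "b \<ge> 0" by linarith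
  then show ?thesis
  proof cases
    case 1 then show ?thesis by (simp add: ff_def)
  next
    case 2
    then have "\<bar>a\<bar> * b + a * \<bar>b\<bar> = 2 * (- (a*b))" by (simp add: algebra_simps)
    then show ?thesis using 2 by (simp add: ff_def)
  next
    case 3
    then have "\<bar>a\<bar> * b + a * \<bar>b\<bar> = 0" by (simp add: algebra_simps)
    then show ?thesis using 3 by (auto simp add: ff_def)
  next
    case 4
    then have "\<bar>a\<bar> * b + a * \<bar>b\<bar> = 0" by (simp add: algebra_simps)
    then show ?thesis using 4 by (auto simp add: ff_def)
  qed
qed

lemma ff_0 [simp]: "ff 0 b = 0" "ff a 0 = 0" by (auto simp: ff_alt)

lemma mat_mut_ff: "mat_mut k B i j = (if i = k \<or> j = k then - B i j else B i j + ff (B i k) (B k j))"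
  by (simp add: mat_mut_def ff_def)

definition EM :: "'a set \<Rightarrow> ('a \<Rightarrow> 'a \<Rightarrow> int) \<Rightarrow> 'a \<Rightarrow> 'a \<Rightarrow> int" where
  "EM S B i j = (if i \<in> S \<or> j \<in> S then - B i j else B i j + (\<Sum>k\<in>S. ff (B i k) (B k j)))"

lemma EM_col:
  assumes "finite S" "x \<notin> S" "\<forall>k\<in>S. B k x = 0"
  shows "EM S B i x = B i x"
  using assms by (auto simp: EM_def)

lemma EM_row:
  assumes "finite S" "x \<notin> S" "\<forall>k\<in>S. B x k = 0"
  shows "EM S B x j = B x j"
  using assms by (auto simp: EM_def)

lemma fold_mat_mut:
  assumes "distinct xs" "\<forall>k\<in>set xs. \<forall>k'\<in>set xs. B k k' = 0"
  shows "fold mat_mut xs B = EM (set xs) B"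
  using assms
proof (induction xs rule: rev_induct)
  case Nil
  then show ?case by (auto simp: EM_def fun_eq_iff)
next
  case (snoc x xs)
  let ?S = "set xs"
  have IH: "fold mat_mut xs B = EM ?S B" using snoc by auto
  have xn: "x \<notin> ?S" using snoc by auto
  have Z: "\<forall>k\<in>insert x ?S. \<forall>k'\<in>insert x ?S. B k k' = 0" using snoc by auto
  have col: "EM ?S B i x = B i x" for i using Z xn by (intro EM_col) auto
  have row: "EM ?S B x j = B x j" for j using Z xn by (intro EM_row) auto
  show ?case
  proof (rule ext, rule ext)
    fix i j
    show "fold mat_mut (xs @ [x]) B i j = EM (set (xs @ [x])) B i j"
      using Z xn
      by (simp add: IH mat_mut_ff) (auto simp: col row EM_def)
  qed
qed

definition newx :: "('v \<Rightarrow> 'v \<Rightarrow> int) \<Rightarrow> ('v \<Rightarrow> 'v ratfun) \<Rightarrow> 'v \<Rightarrow> 'v ratfun" where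
  "newx B x k = (\<lambda>u. ((\<Prod>i\<in>{i. B i k > 0}. x i u ^ nat (B i k))
                  + (\<Prod>i\<in>{i. B i k < 0}. x i u ^ nat (- B i k))) / x k u)"

lemma fold_seed_mut:
  assumes "distinct xs" "\<forall>k\<in>set xs. \<forall>k'\<in>set xs. B k k' = 0"
  shows "fold (seed_mut UNIV) xs (B, x) = (EM (set xs) B, \<lambda>k. if k \<in> set xs then newx B x k else x k)"
  using assms
proof (induction xs rule: rev_induct)
  case Nil
  then show ?case using fold_mat_mut[of "[]" B] by auto
next
  case (snoc y xs)
  let ?S = "set xs"
  have IH: "fold (seed_mut UNIV) xs (B, x) = (EM ?S B, \<lambda>k. if k \<in> ?S then newx B x k else x k)" using snoc by auto
  have xn: "y \<notin> ?S" using snoc by auto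
  have Z: "\<forall>k\<in>insert y ?S. \<forall>k'\<in>insert y ?S. B k k' = 0" using snoc by auto
  have col: "EM ?S B i y = B i y" for i using Z xn by (intro EM_col) auto
  have m: "mat_mut y (EM ?S B) = EM (set (xs @ [y])) B"
    using fold_mat_mut[of "xs @ [y]" B] fold_mat_mut[of xs B] snoc.prems by simp
  have p1: "(\<Prod>i\<in>{i. B i y > 0}. (if i \<in> ?S then newx B x i else x i) u ^ nat (B i y))
        = (\<Prod>i\<in>{i. B i y > 0}. x i u ^ nat (B i y))" for u
    using Z by (intro prod.cong) auto
  have p2: "(\<Prod>i\<in>{i. B i y < 0}. (if i \<in> ?S then newx B x i else x i) u ^ nat (- B i y))
        = (\<Prod>i\<in>{i. B i y < 0}. x i u ^ nat (- B i y))" for u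
    using Z by (intro prod.cong) auto
  show ?case
    unfolding fold_append comp_def fold.simps id_def IH
    apply (simp add: seed_mut_def m col xn)
    apply (rule ext)
    using p1 p2 xn by (auto simp: newx_def)
qed

definition skewD :: "('a \<Rightarrow> int) \<Rightarrow> ('a \<Rightarrow> 'a \<Rightarrow> int) \<Rightarrow> bool" where
  "skewD D B \<longleftrightarrow> (\<forall>i j. D i * B i j = - (D j * B j i))"

lemma sign_rel:
  fixes p s d e :: int
  assumes "0 < d" "0 < e" "d * p = - (e * s)"
  shows "(p > 0 \<longleftrightarrow> s < 0) \<and> (p < 0 \<longleftrightarrow> s > 0)"
proof -
  have "p > 0 \<longleftrightarrow> d * p > 0" using assms(1) by (simp add: zero_less_mult_iff)
  moreover have "s < 0 \<longleftrightarrow> e * s < 0" using assms(2) by (simp add: mult_less_0_iff)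
  moreover have "p < 0 \<longleftrightarrow> d * p < 0" using assms(1) by (simp add: mult_less_0_iff)
  moreover have "s > 0 \<longleftrightarrow> e * s > 0" using assms(2) by (simp add: zero_less_mult_iff)
  ultimately show ?thesis using assms(3) by linarith
qed

lemma skew_mut:
  assumes D: "\<forall>i. 0 < D i" and sk: "skewD D B"
  shows "skewD D (mat_mut k B)"
  unfolding skewD_def
proof (intro allI)
  fix i j
  show "D i * mat_mut k B i j = - (D j * mat_mut k B j i)"
  proof (cases "i = k \<or> j = k")
    case True
    have "D i * B i j = - (D j * B j i)" using sk unfolding skewD_def by blast
    then show ?thesis using True by (auto simp: mat_mut_ff)
  next
    case False
    define p q r s where "p = B i k" "q = B k j" "r = B j k" "s = B k i"
    have e1: "D i * p = - (D k * s)" and e2: "D k * q = - (D j * r)"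
      using sk unfolding skewD_def p_q_r_s_def by blast+
    have key: "D i * (p * q) = D j * (r * s)"
    proof -
      have "D i * (p * q) = (D i * p) * q" by simp
      also have "\<dots> = - s * (D k * q)" using e1 by simp
      also have "\<dots> = D j * (r * s)" using e2 by simp
      finally show ?thesis .
    qed
    have s1: "(p > 0 \<longleftrightarrow> s < 0) \<and> (p < 0 \<longleftrightarrow> s > 0)" using sign_rel[OF _ _ e1] D by auto
    have s2: "(q > 0 \<longleftrightarrow> r < 0) \<and> (q < 0 \<longleftrightarrow> r > 0)" using sign_rel[OF _ _ e2] D by auto
    have "D i * ff p q = - (D j * ff r s)"
      using s1 s2 key by (auto simp: ff_alt)
    moreover have "D i * B i j = - (D j * B j i)" using sk unfolding skewD_def by blast
    ultimately show ?thesis using False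
      by (simp add: mat_mut_ff p_q_r_s_def[symmetric] algebra_simps)
  qed
qed

lemma skew_fold_mut:
  assumes "\<forall>i. 0 < D i" "skewD D B"
  shows "skewD D (fold mat_mut xs B)"
  using assms by (induction xs arbitrary: B) (auto intro: skew_mut)

lemma skew_fold_orbit_mut:
  assumes "\<forall>i. 0 < D i" "skewD D B"
  shows "skewD D (fold orbit_mut Is B)"
  using assms by (induction Is arbitrary: B) (auto simp: orbit_mut_def intro: skew_fold_mut)



lemma ff_pp: "x \<ge> 0 \<Longrightarrow> y \<ge> 0 \<Longrightarrow> ff x y = x * y" by (auto simp: ff_alt)
lemma ff_nn: "x \<le> 0 \<Longrightarrow> y \<le> 0 \<Longrightarrow> ff x y = - (x * y)" by (auto simp: ff_alt)
lemma ff_pn: "x \<ge> 0 \<Longrightarrow> y \<le> 0 \<Longrightarrow> ff x y = 0" by (auto simp: ff_alt)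
lemma ff_np: "x \<le> 0 \<Longrightarrow> y \<ge> 0 \<Longrightarrow> ff x y = 0" by (auto simp: ff_alt)

lemma alg:
  fixes a :: "'a \<Rightarrow> 'b \<Rightarrow> int" and b :: "'b \<Rightarrow> int"
  assumes fin: "finite I" "finite K" and k0: "k0 \<in> K"
    and sa: "\<forall>i\<in>I. \<forall>k\<in>K. \<forall>i'\<in>I. \<forall>k'\<in>K. \<not> (a i k > 0 \<and> a i' k' < 0)"
    and sb: "\<forall>k\<in>K. \<forall>k'\<in>K. \<not> (b k > 0 \<and> b k' < 0)"
    and hs: "\<forall>k\<in>K. (\<Sum>i\<in>I. a i k) = s"
  shows "(\<Sum>i\<in>I. \<Sum>k\<in>K. ff (a i k) (b k)) = ff s (\<Sum>k\<in>K. b k)"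
proof -
  have prod: "(\<Sum>i\<in>I. \<Sum>k\<in>K. a i k * b k) = s * (\<Sum>k\<in>K. b k)"
  proof -
    have "(\<Sum>i\<in>I. \<Sum>k\<in>K. a i k * b k) = (\<Sum>k\<in>K. \<Sum>i\<in>I. a i k * b k)" by (rule sum.swap)
    also have "\<dots> = (\<Sum>k\<in>K. (\<Sum>i\<in>I. a i k) * b k)" by (simp add: sum_distrib_right)
    also have "\<dots> = (\<Sum>k\<in>K. s * b k)" using hs by simp
    finally show ?thesis by (simp add: sum_distrib_left)
  qed
  have A: "(\<forall>i\<in>I. \<forall>k\<in>K. a i k \<ge> 0) \<or> (\<forall>i\<in>I. \<forall>k\<in>K. a i k \<le> 0)"
    using sa by (meson not_le)
  have Bs: "(\<forall>k\<in>K. b k \<ge> 0) \<or> (\<forall>k\<in>K. b k \<le> 0)"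
    using sb by (meson not_le)
  have s_eq: "s = (\<Sum>i\<in>I. a i k0)" using hs k0 by simp
  from A show ?thesis
  proof
    assume ap: "\<forall>i\<in>I. \<forall>k\<in>K. a i k \<ge> 0"
    have sp: "s \<ge> 0" unfolding s_eq using ap k0 by (auto intro: sum_nonneg)
    from Bs show ?thesis
    proof
      assume bp: "\<forall>k\<in>K. b k \<ge> 0"
      have "(\<Sum>i\<in>I. \<Sum>k\<in>K. ff (a i k) (b k)) = (\<Sum>i\<in>I. \<Sum>k\<in>K. a i k * b k)"
        apply (intro sum.cong refl) using ap bp by (simp add: ff_pp)
      also have "\<dots> = ff s (\<Sum>k\<in>K. b k)" using prod sp bp by (simp add: ff_pp sum_nonneg)
      finally show ?thesis .
    next
      assume bn: "\<forall>k\<in>K. b k \<le> 0"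
      have "(\<Sum>i\<in>I. \<Sum>k\<in>K. ff (a i k) (b k)) = 0"
        using ap bn by (auto intro!: sum.neutral simp: ff_pn)
      also have "\<dots> = ff s (\<Sum>k\<in>K. b k)" using sp bn by (simp add: ff_pn sum_nonpos)
      finally show ?thesis .
    qed
  next
    assume an: "\<forall>i\<in>I. \<forall>k\<in>K. a i k \<le> 0"
    have sn: "s \<le> 0" unfolding s_eq using an k0 by (auto intro: sum_nonpos)
    from Bs show ?thesis
    proof
      assume bp: "\<forall>k\<in>K. b k \<ge> 0"
      have "(\<Sum>i\<in>I. \<Sum>k\<in>K. ff (a i k) (b k)) = 0"
        using an bp by (auto intro!: sum.neutral simp: ff_np)
      also have "\<dots> = ff s (\<Sum>k\<in>K. b k)" using sn bp by (simp add: ff_np sum_nonneg)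
      finally show ?thesis .
    next
      assume bn: "\<forall>k\<in>K. b k \<le> 0"
      have "(\<Sum>i\<in>I. \<Sum>k\<in>K. ff (a i k) (b k)) = (\<Sum>i\<in>I. \<Sum>k\<in>K. - (a i k * b k))"
        apply (intro sum.cong refl) using an bn by (simp add: ff_nn)
      also have "\<dots> = - (s * (\<Sum>k\<in>K. b k))" using prod by (simp add: sum_negf)
      also have "\<dots> = ff s (\<Sum>k\<in>K. b k)" using sn bn by (simp add: ff_nn sum_nonpos)
      finally show ?thesis .
    qed
  qed
qed

lemma fold_seeds:
  "S \<in> seeds UNIV A \<Longrightarrow> fold (seed_mut UNIV) xs S \<in> seeds UNIV A"
proof (induction xs arbitrary: S)
  case (Cons a xs)
  have "seed_mut UNIV a S \<in> seeds UNIV A" using Cons.prems by (rule seeds.mut) simp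
  then show ?case using Cons.IH by simp
qed simp

locale fsetup =
  fixes A :: "'a::finite \<Rightarrow> 'a \<Rightarrow> int" and G :: "('a \<Rightarrow> 'a) set" and D :: "'a \<Rightarrow> int"
  assumes adm: "admissible A G" and stab: "stable A G"
    and Dpos: "\<forall>i. 0 < D i" and skA: "skewD D A"
begin

lemma pg: "perm_group G" using adm by (simp add: admissible_def)

lemma orb_refl: "i \<in> orbit G i"
proof -
  have "id \<in> G" using pg unfolding perm_group_def by blast
  then show ?thesis unfolding orbit_def by (metis id_apply image_eqI)
qed

lemma orb_sub: "j \<in> orbit G i \<Longrightarrow> orbit G j \<subseteq> orbit G i"
proof
  fix x assume "j \<in> orbit G i" "x \<in> orbit G j"
  then obtain g h where g: "g \<in> G" "j = g i" and h: "h \<in> G" "x = h j" unfolding orbit_def by auto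
  then have "x = (h \<circ> g) i" "h \<circ> g \<in> G" using pg unfolding perm_group_def by auto
  then show "x \<in> orbit G i" unfolding orbit_def by blast
qed

lemma orb_sym: "j \<in> orbit G i \<Longrightarrow> i \<in> orbit G j"
proof -
  assume "j \<in> orbit G i"
  then obtain g where g: "g \<in> G" "j = g i" unfolding orbit_def by auto
  then have "inv g \<in> G" "bij g" using pg unfolding perm_group_def by auto
  moreover have "inv g j = i" using g \<open>bij g\<close> by (simp add: bij_is_inj)
  ultimately show "i \<in> orbit G j" unfolding orbit_def by (metis image_eqI)
qed

lemma orb_eq: "j \<in> orbit G i \<Longrightarrow> orbit G j = orbit G i"
  using orb_sub orb_sym by blast

lemma orbits_eq: "I \<in> orbits G \<Longrightarrow> i \<in> I \<Longrightarrow> I = orbit G i"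
proof -
  assume "I \<in> orbits G" "i \<in> I"
  then obtain c where "I = orbit G c" unfolding orbits_def by blast
  then show ?thesis using orb_eq \<open>i \<in> I\<close> by simp
qed

lemma orb_iff: assumes "I \<in> orbits G" "i \<in> I" shows "(j \<in> I \<longleftrightarrow> orbit G j = I)"
proof
  assume "j \<in> I" then show "orbit G j = I" using orbits_eq[OF assms(1)] by simp
next
  assume "orbit G j = I" then show "j \<in> I" using orb_refl by blast
qed

lemma orbit_in: "orbit G i \<in> orbits G" unfolding orbits_def by simp

lemma orb_closed: assumes "g \<in> G" "I \<in> orbits G" "i \<in> I" shows "g i \<in> I"
proof -
  have "I = orbit G i" using assms(2,3) by (rule orbits_eq)
  then show ?thesis using assms(1) unfolding orbit_def by blast
qed

lemma orb_bij: assumes "g \<in> G" "I \<in> orbits G" shows "bij_betw g I I"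
proof -
  have b: "bij g" "inv g \<in> G" using assms pg unfolding perm_group_def by auto
  have "g ` I \<subseteq> I" using orb_closed assms by auto
  moreover have "I \<subseteq> g ` I"
  proof
    fix j assume "j \<in> I"
    then have "inv g j \<in> I" using orb_closed[OF b(2) assms(2)] by auto
    moreover have "g (inv g j) = j" using b by (simp add: bij_is_surj surj_f_inv_f)
    ultimately show "j \<in> g ` I" by force
  qed
  ultimately show ?thesis using b by (auto simp: bij_betw_def bij_def inj_def inj_on_def)
qed

lemma orb_trans: assumes "I \<in> orbits G" "i \<in> I" "j \<in> I" shows "\<exists>g\<in>G. g i = j"
proof -
  have "I = orbit G i" using assms(1,2) by (rule orbits_eq)
  then show ?thesis using assms(3) unfolding orbit_def by blast
qed

lemma orbits_disj: "I \<in> orbits G \<Longrightarrow> J \<in> orbits G \<Longrightarrow> x \<in> I \<Longrightarrow> x \<in> J \<Longrightarrow> I = J"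
  using orbits_eq by blast

definition good :: "('a \<Rightarrow> 'a \<Rightarrow> int) \<Rightarrow> bool" where
  "good B \<longleftrightarrow> admissible B G \<and> skewD D B"

lemma good_chain: "set Is \<subseteq> orbits G \<Longrightarrow> good (fold orbit_mut Is A)"
  using stab skew_fold_orbit_mut[OF Dpos skA] unfolding good_def stable_def by blast

lemma skew_inst: "skewD D B \<Longrightarrow> D i * B i j = - (D j * B j i)"
  unfolding skewD_def by blast

lemma neg_flip: assumes "good B" "B i j < 0" shows "B j i > 0"
proof -
  have "D i * B i j = - (D j * B j i)" using assms skew_inst good_def by blast
  then show ?thesis using sign_rel[of "D i" "D j" "B i j" "B j i"] Dpos assms(2) by auto
qed

lemma pos_flip: assumes "good B" "B i j > 0" shows "B j i < 0"
proof -
  have "D i * B i j = - (D j * B j i)" using assms skew_inst good_def by blast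
  then show ?thesis using sign_rel[of "D i" "D j" "B i j" "B j i"] Dpos assms(2) by auto
qed

lemma zero_in: assumes "good B" "K \<in> orbits G" "k \<in> K" "k' \<in> K" shows "B k k' = 0"
proof (cases "k = k'")
  case True
  have "D k * B k k = - (D k * B k k)" using assms skew_inst good_def by blast
  then show ?thesis using True Dpos[rule_format, of k] by simp
next
  case False
  have a: "admissible B G" using assms good_def by blast
  have "k' \<in> orbit G k" "k \<in> orbit G k'" using assms orbits_eq by blast+
  then have "B k k' \<le> 0" "B k' k \<le> 0" using a False unfolding admissible_def by auto
  moreover have "D k * B k k' = - (D k' * B k' k)" using assms skew_inst good_def by blast
  moreover have "\<not> B k k' < 0" using neg_flip[OF assms(1)] \<open>B k' k \<le> 0\<close> by force
  ultimately show ?thesis by linarith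
qed

lemma nopath: assumes "good B" "K \<in> orbits G" "k \<in> K" "k' \<in> K" "B k m > 0" "B m k' > 0"
  shows False
proof -
  have a: "admissible B G" using assms good_def by blast
  have "k' \<in> orbit G k" using assms orbits_eq by blast
  moreover have "k \<noteq> k'"
  proof
    assume "k = k'"
    then have "B m k < 0" using pos_flip[OF assms(1,5)] by simp
    then show False using assms(6) \<open>k = k'\<close> by simp
  qed
  ultimately show False using a assms(5,6) unfolding admissible_def by blast
qed

lemma row_sign: assumes "good B" "K \<in> orbits G" "k \<in> K" "k' \<in> K"
  shows "\<not> (B i k > 0 \<and> B i k' < 0)"
  using nopath[OF assms(1,2,4,3)] neg_flip[OF assms(1)] by blast

lemma col_sign: assumes "good B" "K \<in> orbits G" "k \<in> K" "k' \<in> K"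
  shows "\<not> (B k j > 0 \<and> B k' j < 0)"
  using nopath[OF assms(1,2,3,4)] neg_flip[OF assms(1)] by blast

lemma autom: "good B \<Longrightarrow> g \<in> G \<Longrightarrow> B (g i) (g j) = B i j"
  unfolding good_def admissible_def automorphism_def by blast

lemma block_sign: assumes "good B" "I \<in> orbits G" "K \<in> orbits G" "i \<in> I" "i' \<in> I" "k \<in> K" "k' \<in> K"
  shows "\<not> (B i k > 0 \<and> B i' k' < 0)"
proof
  assume h: "B i k > 0 \<and> B i' k' < 0"
  obtain g where g: "g \<in> G" "g i' = i" using orb_trans assms by metis
  have "B i (g k') = B i' k'" using autom[OF assms(1) g(1)] g(2) by metis
  moreover have "g k' \<in> K" using orb_closed g assms by blast
  ultimately have "\<not> (B i k > 0 \<and> B i (g k') < 0)" by (intro row_sign[OF assms(1,3,6)])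
  then show False using h \<open>B i (g k') = B i' k'\<close> by simp
qed

lemma qsum: assumes "good B" "I \<in> orbits G" "J \<in> orbits G" "j \<in> J"
  shows "quot_mat B G I J = (\<Sum>i\<in>I. B i j)"
proof -
  define j0 where "j0 = (SOME j. j \<in> J)"
  have j0: "j0 \<in> J" using assms(4) unfolding j0_def by (rule someI)
  obtain g where g: "g \<in> G" "g j0 = j" using orb_trans assms j0 by metis
  have "(\<Sum>i\<in>I. B i j) = (\<Sum>i\<in>I. B (g i) (g j0))"
    using sum.reindex_bij_betw[OF orb_bij[OF g(1) assms(2)], of "\<lambda>i. B i j"] g(2) by simp
  also have "\<dots> = (\<Sum>i\<in>I. B i j0)" using autom[OF assms(1) g(1)] by simp
  finally show ?thesis unfolding quot_mat_def j0_def by simp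
qed

end

context fsetup begin

lemma orbit_ne: "J \<in> orbits G \<Longrightarrow> \<exists>c. c \<in> J"
  unfolding orbits_def using orb_refl by blast

lemma quot_mut:
  assumes gB: "good B" and K: "K \<in> orbits G" and I: "I \<in> orbits G" and J: "J \<in> orbits G"
  shows "quot_mat (EM K B) G I J = mat_mut K (quot_mat B G) I J"
proof -
  define j0 where "j0 = (SOME j. j \<in> J)"
  have j0: "j0 \<in> J" using orbit_ne[OF J] unfolding j0_def by (metis someI)
  have q1: "quot_mat B G I J = (\<Sum>i\<in>I. B i j0)" by (simp add: quot_mat_def j0_def)
  have q2: "quot_mat (EM K B) G I J = (\<Sum>i\<in>I. EM K B i j0)" by (simp add: quot_mat_def j0_def)
  have q3: "quot_mat B G K J = (\<Sum>k\<in>K. B k j0)" by (simp add: quot_mat_def j0_def)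
  show ?thesis
  proof (cases "I = K \<or> J = K")
    case True
    then have "\<forall>i\<in>I. i \<in> K \<or> j0 \<in> K" using j0 by auto
    then have "(\<Sum>i\<in>I. EM K B i j0) = (\<Sum>i\<in>I. - B i j0)"
      by (intro sum.cong refl) (auto simp: EM_def)
    then show ?thesis using True q1 q2 by (auto simp: mat_mut_ff sum_negf)
  next
    case False
    have iK: "i \<notin> K" if "i \<in> I" for i using orbits_disj[OF I K that] False by blast
    have jK: "j0 \<notin> K" using orbits_disj[OF J K j0] False by blast
    obtain k0 where k0: "k0 \<in> K" using orbit_ne[OF K] by blast
    have "(\<Sum>i\<in>I. EM K B i j0) = (\<Sum>i\<in>I. B i j0 + (\<Sum>k\<in>K. ff (B i k) (B k j0)))"
      by (intro sum.cong refl) (use iK jK in \<open>auto simp: EM_def\<close>)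
    also have "\<dots> = (\<Sum>i\<in>I. B i j0) + (\<Sum>i\<in>I. \<Sum>k\<in>K. ff (B i k) (B k j0))"
      by (simp add: sum.distrib)
    also have "(\<Sum>i\<in>I. \<Sum>k\<in>K. ff (B i k) (B k j0)) = ff (quot_mat B G I K) (\<Sum>k\<in>K. B k j0)"
    proof (rule alg[OF _ _ k0])
      show "\<forall>i\<in>I. \<forall>k\<in>K. \<forall>i'\<in>I. \<forall>k'\<in>K. \<not> (B i k > 0 \<and> B i' k' < 0)"
        using block_sign[OF gB I K] by blast
      show "\<forall>k\<in>K. \<forall>k'\<in>K. \<not> (B k j0 > 0 \<and> B k' j0 < 0)"
        using col_sign[OF gB K] by blast
      show "\<forall>k\<in>K. (\<Sum>i\<in>I. B i k) = quot_mat B G I K"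
        using qsum[OF gB I K] by simp
    qed simp_all
    finally show ?thesis using False q1 q2 q3 by (simp add: mat_mut_ff)
  qed
qed

lemma prod_regroup:
  fixes w :: "'a set \<Rightarrow> real" and c :: "'a \<Rightarrow> int"
  assumes sg: "\<forall>J\<in>orbits G. (\<forall>i\<in>J. c i \<ge> 0) \<or> (\<forall>i\<in>J. c i \<le> 0)"
  shows "(\<Prod>i\<in>{i. c i > 0}. w (orbit G i) ^ nat (c i))
       = (\<Prod>J\<in>{J\<in>orbits G. (\<Sum>i\<in>J. c i) > 0}. w J ^ nat (\<Sum>i\<in>J. c i))"
proof -
  have "(\<Prod>i\<in>{i. c i > 0}. w (orbit G i) ^ nat (c i))
      = (\<Prod>J\<in>orbits G. \<Prod>i\<in>{i \<in> {i. c i > 0}. orbit G i = J}. w (orbit G i) ^ nat (c i))"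
    by (rule prod.group[symmetric]) (auto simp: orbit_in)
  also have "\<dots> = (\<Prod>J\<in>orbits G. if (\<Sum>i\<in>J. c i) > 0 then w J ^ nat (\<Sum>i\<in>J. c i) else 1)"
  proof (rule prod.cong[OF refl])
    fix J assume J: "J \<in> orbits G"
    have eqv: "orbit G i = J \<longleftrightarrow> i \<in> J" for i
      using orbits_eq[OF J] orb_refl by blast
    have oj: "i \<in> J \<Longrightarrow> orbit G i = J" for i using orbits_eq[OF J] by simp
    have "(\<Prod>i\<in>{i \<in> {i. c i > 0}. orbit G i = J}. w (orbit G i) ^ nat (c i))
        = (\<Prod>i\<in>{i\<in>J. c i > 0}. w J ^ nat (c i))"
      by (rule prod.cong) (use eqv in \<open>auto simp: oj\<close>)
    also have "\<dots> = w J ^ (\<Sum>i\<in>{i\<in>J. c i > 0}. nat (c i))" by (simp add: power_sum)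
    also have "\<dots> = (if (\<Sum>i\<in>J. c i) > 0 then w J ^ nat (\<Sum>i\<in>J. c i) else 1)"
    proof (cases "(\<Sum>i\<in>J. c i) > 0")
      case True
      have nn: "\<forall>i\<in>J. c i \<ge> 0"
      proof (rule ccontr)
        assume "\<not> (\<forall>i\<in>J. c i \<ge> 0)"
        then have "\<forall>i\<in>J. c i \<le> 0" using sg J by blast
        then have "(\<Sum>i\<in>J. c i) \<le> 0" by (simp add: sum_nonpos)
        then show False using True by simp
      qed
      have "int (\<Sum>i\<in>{i\<in>J. c i > 0}. nat (c i)) = (\<Sum>i\<in>{i\<in>J. c i > 0}. c i)"
        by (simp add: of_nat_sum)
      also have "\<dots> = (\<Sum>i\<in>J. c i)"
        by (rule sum.mono_neutral_left) (use nn in auto)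
      finally have "(\<Sum>i\<in>{i\<in>J. c i > 0}. nat (c i)) = nat (\<Sum>i\<in>J. c i)" by linarith
      then show ?thesis using True by simp
    next
      case False
      have "{i\<in>J. c i > 0} = {}"
      proof (rule ccontr)
        assume "{i\<in>J. c i > 0} \<noteq> {}"
        then obtain i where i: "i \<in> J" "c i > 0" by blast
        then have "\<forall>i\<in>J. c i \<ge> 0" using sg J by force
        then have "c i \<le> (\<Sum>i\<in>J. c i)" using i by (intro member_le_sum) auto
        then show False using False i by simp
      qed
      then show ?thesis using False by (simp only: sum.empty) simp
    qed
    finally show "(\<Prod>i\<in>{i \<in> {i. c i > 0}. orbit G i = J}. w (orbit G i) ^ nat (c i))
        = (if (\<Sum>i\<in>J. c i) > 0 then w J ^ nat (\<Sum>i\<in>J. c i) else 1)" .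
  qed
  also have "\<dots> = (\<Prod>J\<in>{J\<in>orbits G. (\<Sum>i\<in>J. c i) > 0}. w J ^ nat (\<Sum>i\<in>J. c i))"
    by (simp add: prod.inter_filter)
  finally show ?thesis .
qed


lemma sim:
  assumes "S \<in> seeds (orbits G) (quot_mat A G)"
  shows "\<exists>Is x. set Is \<subseteq> orbits G \<and> (fold orbit_mut Is A, x) \<in> seeds UNIV A \<and>
     (\<forall>I\<in>orbits G. \<forall>J\<in>orbits G. fst S I J = quot_mat (fold orbit_mut Is A) G I J) \<and>
     (\<forall>i. snd S (orbit G i) = (\<lambda>v. x i (\<lambda>j. v (orbit G j))))"
  using assms
proof (induction rule: seeds.induct)
  case init
  show ?case
    by (rule exI[of _ "[]"], rule exI[of _ "\<lambda>i u. u i"]) (auto intro: seeds.init)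
next
  case (mut S K)
  obtain Is x where Is: "set Is \<subseteq> orbits G" and sx: "(fold orbit_mut Is A, x) \<in> seeds UNIV A"
    and q: "\<forall>I\<in>orbits G. \<forall>J\<in>orbits G. fst S I J = quot_mat (fold orbit_mut Is A) G I J"
    and y: "\<forall>i. snd S (orbit G i) = (\<lambda>v. x i (\<lambda>j. v (orbit G j)))" using mut.IH by blast
  obtain C yy where S: "S = (C, yy)" by (cases S)
  have K: "K \<in> orbits G" by (rule mut.hyps(2))
  define B where "B = fold orbit_mut Is A"
  have gB: "good B" using good_chain[OF Is] B_def by simp
  define xs where "xs = (SOME xs. distinct xs \<and> set xs = K)"
  have xs: "distinct xs \<and> set xs = K"
    unfolding xs_def by (rule someI_ex) (use finite_distinct_list[of K] in auto)
  have Z: "\<forall>k\<in>set xs. \<forall>k'\<in>set xs. B k k' = 0" using zero_in[OF gB K] xs by blast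
  define x' where "x' = (\<lambda>k. if k \<in> K then newx B x k else x k)"
  have om: "orbit_mut K B = EM K B"
    unfolding orbit_mut_def xs_def[symmetric] using fold_mat_mut[of xs B] xs Z by simp
  have fs: "fold (seed_mut UNIV) xs (B, x) = (EM K B, x')"
    using fold_seed_mut[of xs B x] xs Z unfolding x'_def by simp
  have new: "fold orbit_mut (Is @ [K]) A = EM K B" using om B_def by simp
  have qC: "C I J = quot_mat B G I J" if "I \<in> orbits G" "J \<in> orbits G" for I J
    using q that by (simp add: S B_def)
  show ?case
  proof (intro exI conjI)
    show "set (Is @ [K]) \<subseteq> orbits G" using Is K by simp
    show "(fold orbit_mut (Is @ [K]) A, x') \<in> seeds UNIV A"
      unfolding new using fold_seeds[of "(B,x)" A xs] sx fs B_def by simp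
    show "\<forall>I\<in>orbits G. \<forall>J\<in>orbits G. fst (seed_mut (orbits G) K S) I J
            = quot_mat (fold orbit_mut (Is @ [K]) A) G I J"
    proof (intro ballI)
      fix I J assume I: "I \<in> orbits G" and J: "J \<in> orbits G"
      have "fst (seed_mut (orbits G) K S) I J = mat_mut K C I J" by (simp add: S seed_mut_def)
      also have "\<dots> = mat_mut K (quot_mat B G) I J"
        using qC[OF I J] qC[OF I K] qC[OF K J] by (simp add: mat_mut_ff)
      also have "\<dots> = quot_mat (EM K B) G I J" using quot_mut[OF gB K I J] by simp
      finally show "fst (seed_mut (orbits G) K S) I J = quot_mat (fold orbit_mut (Is @ [K]) A) G I J"
        using new by simp
    qed
    show "\<forall>i. snd (seed_mut (orbits G) K S) (orbit G i) = (\<lambda>v. x' i (\<lambda>j. v (orbit G j)))"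
    proof
      fix i
      show "snd (seed_mut (orbits G) K S) (orbit G i) = (\<lambda>v. x' i (\<lambda>j. v (orbit G j)))"
      proof (cases "i \<in> K")
        case False
        then have "orbit G i \<noteq> K" using orb_refl by blast
        then show ?thesis using y False by (simp add: S seed_mut_def x'_def)
      next
        case True
        have oK: "orbit G i = K" using orbits_eq[OF K True] by simp
        have csum: "(\<Sum>j\<in>J. B j i) = C J K" if "J \<in> orbits G" for J
          using qsum[OF gB that K True] qC[OF that K] by simp
        have sg: "\<forall>J\<in>orbits G. (\<forall>j\<in>J. B j i \<ge> 0) \<or> (\<forall>j\<in>J. B j i \<le> 0)"
        proof
          fix J assume J: "J \<in> orbits G"
          have "\<forall>j\<in>J. \<forall>j'\<in>J. \<not> (B j i > 0 \<and> B j' i < 0)"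
            using block_sign[OF gB J K _ _ True True] by blast
          then show "(\<forall>j\<in>J. B j i \<ge> 0) \<or> (\<forall>j\<in>J. B j i \<le> 0)" by (meson not_le)
        qed
        have sg2: "\<forall>J\<in>orbits G. (\<forall>j\<in>J. - B j i \<ge> 0) \<or> (\<forall>j\<in>J. - B j i \<le> 0)"
          using sg by auto
        show ?thesis
        proof (rule ext)
          fix v
          define w where "w J = yy J v" for J
          have wx: "x j (\<lambda>j. v (orbit G j)) = w (orbit G j)" for j
          proof -
            have "yy (orbit G j) = (\<lambda>v. x j (\<lambda>j. v (orbit G j)))" using y S by simp
            then show ?thesis unfolding w_def by simp
          qed
          have P1: "(\<Prod>j\<in>{j. B j i > 0}. x j (\<lambda>j. v (orbit G j)) ^ nat (B j i))
              = (\<Prod>J\<in>{J\<in>orbits G. C J K > 0}. yy J v ^ nat (C J K))"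
          proof -
            have "(\<Prod>j\<in>{j. B j i > 0}. x j (\<lambda>j. v (orbit G j)) ^ nat (B j i))
                = (\<Prod>j\<in>{j. B j i > 0}. w (orbit G j) ^ nat (B j i))" by (simp add: wx)
            also have "\<dots> = (\<Prod>J\<in>{J\<in>orbits G. (\<Sum>j\<in>J. B j i) > 0}. w J ^ nat (\<Sum>j\<in>J. B j i))"
              by (rule prod_regroup[OF sg])
            also have "\<dots> = (\<Prod>J\<in>{J\<in>orbits G. C J K > 0}. yy J v ^ nat (C J K))"
              by (rule prod.cong) (auto simp: csum w_def)
            finally show ?thesis .
          qed
          have P2: "(\<Prod>j\<in>{j. B j i < 0}. x j (\<lambda>j. v (orbit G j)) ^ nat (- B j i))
              = (\<Prod>J\<in>{J\<in>orbits G. C J K < 0}. yy J v ^ nat (- C J K))"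
          proof -
            have "(\<Prod>j\<in>{j. B j i < 0}. x j (\<lambda>j. v (orbit G j)) ^ nat (- B j i))
                = (\<Prod>j\<in>{j. - B j i > 0}. w (orbit G j) ^ nat (- B j i))" by (simp add: wx)
            also have "\<dots> = (\<Prod>J\<in>{J\<in>orbits G. (\<Sum>j\<in>J. - B j i) > 0}. w J ^ nat (\<Sum>j\<in>J. - B j i))"
              by (rule prod_regroup[OF sg2])
            also have "\<dots> = (\<Prod>J\<in>{J\<in>orbits G. C J K < 0}. yy J v ^ nat (- C J K))"
              by (rule prod.cong) (auto simp: csum w_def sum_negf)
            finally show ?thesis .
          qed
          have xi: "x i (\<lambda>j. v (orbit G j)) = yy K v" using wx[of i] oK by (simp add: w_def)
          show "snd (seed_mut (orbits G) K S) (orbit G i) v = x' i (\<lambda>j. v (orbit G j))"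
            using P1 P2 xi oK True by (simp add: S seed_mut_def x'_def newx_def)
        qed
      qed
    qed
  qed
qed

end

theorem mainTheorem14:
  fixes A :: "'a::finite \<Rightarrow> 'a \<Rightarrow> int" and G :: "('a \<Rightarrow> 'a) set"
  assumes "skew_symmetrizable A"
    and "admissible A G"
    and "stable A G"
    and "\<forall>f\<in>cluster_vars UNIV A. positive_laurent UNIV f"
  shows "\<forall>f\<in>cluster_vars (orbits G) (quot_mat A G). positive_laurent (orbits G) f"
proof
  fix f assume "f \<in> cluster_vars (orbits G) (quot_mat A G)"
  then obtain C y I where S: "(C, y) \<in> seeds (orbits G) (quot_mat A G)" "I \<in> orbits G" "f = y I"
    unfolding cluster_vars_def by blast
  obtain D where D: "\<forall>i. 0 < D i" "\<forall>i j. D i * A i j = - (D j * A j i)"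
    using assms(1) unfolding skew_symmetrizable_def by blast
  have skA: "skewD D A" unfolding skewD_def using D(2) by blast
  interpret fsetup A G D
    by unfold_locales (fact assms(2), fact assms(3), fact D(1), fact skA)
  obtain Is x where sx: "(fold orbit_mut Is A, x) \<in> seeds UNIV A"
    and y: "\<forall>i. y (orbit G i) = (\<lambda>v. x i (\<lambda>j. v (orbit G j)))"
    using sim[OF S(1)] by auto
  obtain i where i: "I = orbit G i" using S(2) unfolding orbits_def by blast
  have "x i \<in> cluster_vars UNIV A" unfolding cluster_vars_def using sx by blast
  then have "positive_laurent UNIV (x i)" using assms(4) by blast
  then have "positive_laurent (range (orbit G)) (\<lambda>v. x i (\<lambda>j. v (orbit G j)))"
    by (rule positive_transfer)
  then show "positive_laurent (orbits G) f" using S(3) i y unfolding orbits_def by simp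
qed

end
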